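(* Let $p$ be a prime, $w\ge 1$ an integer, and let $S\subseteq\mathbb{F}_{p^w}$ with $|S|=s\le p^w-1$. Write $s=s_1p^{w-1}+s_2$ with integers $0\le s_1\le p-1$ and $0\le s_2\le p^{w-1}-1$. For $i=0,\dots,p-1$ let $T_i=\{x\in\mathbb{F}_{p^w}:\mathrm{Tr}(x)=i\}$, let $T^*_{s_1}$ be any subset of $T_{s_1}$ of size $s_2$, and let $S^\star=\left(\bigcup_{i=0}^{s_1-1}T_i\right)\cup T^*_{s_1}$. Then \[ |\omega_p^S|\le|\omega_p^{S^\star}|=\left|s_2\sum_{i=0}^{s_1}\omega_p^i+(p^{w-1}-s_2)\sum_{i=0}^{s_1-1}\omega_p^i\right|\le p^{w-1}\cdot\frac{\sin(\pi s/p^w)}{\sin(\pi/p)}. \]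
   Context: $\mathrm{Tr}:\mathbb{F}_{p^w}\to\mathbb{F}_p$ is the field trace, whose values are identified with integers in $\{0,\dots,p-1\}$; $\omega_p=e^{2\pi\mathbf i/p}\in\mathbb{C}$. For $S\subseteq\mathbb{F}_{p^w}$, $\omega_p^S:=\sum_{x\in S}\omega_p^{\mathrm{Tr}(x)}$. *)

theory Defs
  imports Complex_Main "HOL-Computational_Algebra.Primes"
begin

text \<open>The field F_{p^w} is modelled as an arbitrary finite field type of cardinality p^w
 (any two such are isomorphic). Its absolute trace to the prime field is
 Tr(x) = sum_{j<w} x^(p^j); its value lies in the prime field, which we identify with
 {0,...,p-1} via of_nat.\<close>

definition field_trace :: "nat \<Rightarrow> nat \<Rightarrow> 'a::field \<Rightarrow> 'a" where
  "field_trace p w x = (\<Sum>j<w. x ^ (p ^ j))"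

definition trace_val :: "nat \<Rightarrow> nat \<Rightarrow> 'a::field \<Rightarrow> nat" where
  "trace_val p w x = (THE k. k < p \<and> of_nat k = field_trace p w x)"

definition omega :: "nat \<Rightarrow> nat \<Rightarrow> complex" where
  "omega p k = cis (2 * pi * real k / real p)"

definition omega_sum :: "nat \<Rightarrow> nat \<Rightarrow> 'a::field set \<Rightarrow> complex" where
  "omega_sum p w S = (\<Sum>x\<in>S. omega p (trace_val p w x))"

definition trace_class :: "nat \<Rightarrow> nat \<Rightarrow> nat \<Rightarrow> 'a::field set" where
  "trace_class p w i = {x. trace_val p w x = i}"

end

theory Submission
  imports Defs "HOL-Computational_Algebra.Polynomial" "HOL-Analysis.Convex"
begin


lemma of_nat_card_UNIV_zero:
  "of_nat (card (UNIV :: 'a::{finite,ring_1} set)) = (0::'a)"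
proof -
  have "(\<Sum>x\<in>(UNIV::'a set). x + 1) = (\<Sum>x\<in>UNIV. x)"
    by (rule sum.reindex_bij_witness[of _ "\<lambda>y. y - 1" "\<lambda>y. y + 1"]) auto
  then have "(\<Sum>x\<in>(UNIV::'a set). x) + of_nat (card (UNIV::'a set)) = (\<Sum>x\<in>UNIV. x)"
    by (simp add: sum.distrib)
  then show ?thesis by simp
qed

lemma finite_field_pow_card:
  fixes x :: "'a::{finite,field}"
  shows "x ^ card (UNIV :: 'a set) = x"
proof (cases "x = 0")
  case False
  have "x * (\<Prod>y\<in>UNIV-{0}. x * y) = x * x ^ (card (UNIV :: 'a set) - 1) * \<Prod>(UNIV-{0})"
    by (simp add: prod.distrib mult_ac)
  also have "x * x ^ (card (UNIV :: 'a set) - 1) = x ^ Suc (card (UNIV :: 'a set) - 1)"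
    by (subst power_Suc) auto
  also have "Suc (card (UNIV :: 'a set) - 1) = card (UNIV :: 'a set)"
    using finite_UNIV_card_ge_0[where ?'a = 'a] by simp
  also have "(\<Prod>y\<in>UNIV-{0}. x * y) = (\<Prod>y\<in>UNIV-{0}. y)"
    by (rule prod.reindex_bij_witness[of _ "\<lambda>y. y / x" "\<lambda>y. x * y"]) (use False in auto)
  finally show ?thesis
    by simp
qed (use finite_UNIV_card_ge_0[where ?'a = 'a] in auto)

locale ffield =
  fixes p w :: nat and ty :: "'a::{finite,field} itself"
  assumes pr: "prime p" and w1: "w \<ge> 1" and cardU: "card (UNIV :: 'a set) = p ^ w"
begin

lemma CHAR_eq: "CHAR('a) = p"
proof -
  have "CHAR('a) dvd p ^ w"
    using of_nat_card_UNIV_zero[where 'a='a] cardU of_nat_eq_0_iff_char_dvd by metis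
  moreover have "prime CHAR('a)"
    by (rule prime_CHAR_semidom) (rule finite_imp_CHAR_pos, simp)
  ultimately have "CHAR('a) dvd p" using prime_dvd_power by blast
  then show ?thesis using \<open>prime CHAR('a)\<close> pr primes_dvd_imp_eq by blast
qed

lemma primeC: "prime CHAR('a)" using CHAR_eq pr by simp

lemma p0: "of_nat p = (0::'a)" using CHAR_eq of_nat_CHAR by metis

lemma p2: "p \<ge> 2" using pr prime_ge_2_nat by blast

lemma frob_add: "((x::'a) + y) ^ (p ^ j) = x ^ (p ^ j) + y ^ (p ^ j)"
  by (rule freshmans_dream'[of _ j]) (simp_all add: CHAR_eq pr)

lemma frob_sum: "(sum (f :: 'b \<Rightarrow> 'a) A) ^ (p ^ j) = (\<Sum>i\<in>A. f i ^ (p ^ j))"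
  by (rule freshmans_dream_sum'[of _ j]) (simp_all add: CHAR_eq pr)

lemma pow_pw: "(x::'a) ^ (p ^ w) = x"
  using finite_field_pow_card[of x] cardU by simp

lemma of_nat_pow_p: "(of_nat k :: 'a) ^ p = of_nat k"
proof -
  have "(of_nat k :: 'a) = (\<Sum>i<k. 1)" by simp
  then have "(of_nat k :: 'a) ^ (p ^ 1) = (\<Sum>i<k. (1::'a) ^ (p^1))"
    using frob_sum[of "\<lambda>i. 1" "{..<k}" 1] by simp
  then show ?thesis by simp
qed

lemma of_nat_inj: "a < p \<Longrightarrow> b < p \<Longrightarrow> (of_nat a :: 'a) = of_nat b \<Longrightarrow> a = b"
proof (rule ccontr)
  assume ab: "a < p" "b < p" "(of_nat a :: 'a) = of_nat b" "a \<noteq> b"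
  { fix a b :: nat assume "a < p" "b < p" "(of_nat a :: 'a) = of_nat b" "a < b"
    then have "(of_nat (b - a) :: 'a) = 0" by (simp add: of_nat_diff)
    then have "p dvd (b - a)" using of_nat_eq_0_iff_char_dvd CHAR_eq by metis
    moreover have "0 < b - a" "b - a < p" using \<open>a < b\<close> \<open>b < p\<close> by auto
    ultimately have False using nat_dvd_not_less by blast
  }
  then show False using ab by (metis linorder_neqE_nat)
qed

lemma roots_p: 
  assumes "(y::'a) ^ p = y" shows "\<exists>k<p. y = of_nat k"
proof -
  define P :: "'a poly" where "P = monom 1 p - [:0, 1:]"
  have PY: "poly P z = z ^ p - z" for z by (simp add: P_def poly_monom)
  have "coeff P p = 1" using p2 by (simp add: P_def coeff_monom coeff_pCons split: nat.split)
  then have "P \<noteq> 0" by auto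
  have "degree P \<le> p" unfolding P_def using p2
    by (intro degree_diff_le) (auto simp: degree_monom_le)
  have R: "{z. poly P z = 0} = {z. z ^ p = z}" by (auto simp: PY)
  have "card {z::'a. z ^ p = z} \<le> p" using card_poly_roots_bound[OF \<open>P \<noteq> 0\<close>] \<open>degree P \<le> p\<close> R by simp
  moreover have sub: "of_nat ` {..<p} \<subseteq> {z::'a. z ^ p = z}" using of_nat_pow_p by auto
  moreover have "card (of_nat ` {..<p} :: 'a set) = p"
    by (subst card_image) (auto intro!: inj_onI intro: of_nat_inj)
  moreover have "card (of_nat ` {..<p} :: 'a set) \<le> card {z::'a. z ^ p = z}"
    using sub by (intro card_mono) auto
  ultimately have "of_nat ` {..<p} = {z::'a. z ^ p = z}"
    by (intro card_subset_eq) auto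
  with assms show ?thesis by auto
qed

lemma pow_p_iter: "(c::'a) ^ p = c \<Longrightarrow> c ^ (p ^ j) = c"
proof (induction j)
  case (Suc j)
  have "c ^ (p ^ Suc j) = (c ^ (p ^ j)) ^ p" by (metis power_mult power_Suc2)
  then show ?case using Suc by simp
qed simp

lemma tr_pow: "(field_trace p w (x::'a)) ^ p = field_trace p w x"
proof -
  define f where "f j = x ^ (p ^ j)" for j
  have "(field_trace p w x) ^ (p ^ 1) = (\<Sum>j<w. (x ^ (p ^ j)) ^ (p ^ 1))"
    unfolding field_trace_def by (rule frob_sum)
  also have "\<dots> = (\<Sum>j<w. f (Suc j))"
    by (simp add: f_def power_mult[symmetric] mult.commute)
  also have "\<dots> = (\<Sum>j<w. f j)"
  proof -
    have "(\<Sum>j<Suc w. f j) = f 0 + (\<Sum>j<w. f (Suc j))" by (rule sum.lessThan_Suc_shift)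
    moreover have "(\<Sum>j<Suc w. f j) = (\<Sum>j<w. f j) + f w" by simp
    moreover have "f w = f 0" by (simp add: f_def pow_pw)
    ultimately show ?thesis by (simp add: add.commute)
  qed
  finally show ?thesis by (simp add: f_def field_trace_def)
qed

lemma tv_unique: "k < p \<Longrightarrow> of_nat k = field_trace p w (x::'a) \<Longrightarrow> trace_val p w x = k"
  unfolding trace_val_def
  by (rule the_equality) (auto intro: of_nat_inj)

lemma tv: "trace_val p w (x::'a) < p \<and> of_nat (trace_val p w x) = field_trace p w x"
proof -
  obtain k where "k < p" "field_trace p w x = of_nat k" using roots_p[OF tr_pow] by blast
  then show ?thesis using tv_unique[of k x] by simp
qed

lemma tr_add: "field_trace p w ((x::'a) + y) = field_trace p w x + field_trace p w y"
  unfolding field_trace_def by (simp add: frob_add sum.distrib)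

lemma tr_scale: "(c::'a) ^ p = c \<Longrightarrow> field_trace p w (c * x) = c * field_trace p w x"
  unfolding field_trace_def by (simp add: power_mult_distrib pow_p_iter sum_distrib_left)

lemma exists_tr1: "\<exists>d::'a. field_trace p w d = 1"
proof -
  define P :: "'a poly" where "P = (\<Sum>j<w. monom 1 (p ^ j))"
  have PY: "poly P z = field_trace p w z" for z
    by (simp add: P_def poly_sum poly_monom field_trace_def)
  have "coeff P 1 = (\<Sum>j<w. if p ^ j = 1 then 1 else 0)"
    by (simp add: P_def coeff_sum coeff_monom)
  also have "\<dots> = (\<Sum>j<w. if j = 0 then 1 else 0)"
    using p2 by (intro sum.cong) auto
  also have "\<dots> = 1" using w1 by (simp add: sum.delta)
  finally have "coeff P 1 = 1" by simp
  then have "P \<noteq> 0" by auto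
  have "degree P \<le> p ^ (w - 1)" unfolding P_def
  proof (rule degree_sum_le)
    fix j assume "j \<in> {..<w}"
    then have "p ^ j \<le> p ^ (w - 1)" using p2 by (intro power_increasing) auto
    then show "degree (monom (1::'a) (p ^ j)) \<le> p ^ (w - 1)" by (simp add: degree_monom_eq)
  qed simp
  have "\<exists>c::'a. field_trace p w c \<noteq> 0"
  proof (rule ccontr)
    assume "\<not> ?thesis"
    then have "{z::'a. poly P z = 0} = UNIV" by (auto simp: PY)
    then have "p ^ w \<le> p ^ (w - 1)"
      using card_poly_roots_bound[OF \<open>P \<noteq> 0\<close>] \<open>degree P \<le> _\<close> cardU by simp
    moreover have "p ^ (w - 1) < p ^ w" using p2 w1 by (intro power_strict_increasing) auto
    ultimately show False by simp
  qed
  then obtain c :: 'a where c: "field_trace p w c \<noteq> 0" by blast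
  define t where "t = field_trace p w c"
  have tp: "t ^ p = t" unfolding t_def by (rule tr_pow)
  have "(inverse t) ^ p = inverse t" using tp by (simp add: power_inverse)
  then have "field_trace p w (inverse t * c) = inverse t * t"
    unfolding t_def by (rule tr_scale)
  then show ?thesis using c t_def by auto
qed

lemma of_nat_mod_p: "(of_nat (n mod p) :: 'a) = of_nat n"
proof -
  have "n = n mod p + p * (n div p)" by simp
  then have "(of_nat n :: 'a) = of_nat (n mod p) + of_nat p * of_nat (n div p)"
    by (metis of_nat_add of_nat_mult)
  then show ?thesis using p0 by simp
qed

lemma tv_shift:
  assumes "field_trace p w d = (1::'a)"
  shows "trace_val p w (x + d) = (trace_val p w x + 1) mod p"
proof (rule tv_unique)
  show "(trace_val p w x + 1) mod p < p" using p2 by simp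
  show "of_nat ((trace_val p w x + 1) mod p) = field_trace p w (x + d)"
    using tv[of x] assms by (simp add: of_nat_mod_p tr_add)
qed

lemma mod_suc_inj: "k < p \<Longrightarrow> i < p \<Longrightarrow> (k + 1) mod p = (i + 1) mod p \<Longrightarrow> k = i"
proof -
  assume a: "k < p" "i < p" "(k + 1) mod p = (i + 1) mod p"
  have e: "j < p \<Longrightarrow> (j + 1) mod p = (if j + 1 = p then 0 else j + 1)" for j
    by auto
  show "k = i" using a e[of k] e[of i] by (auto split: if_splits)
qed

lemma card_class_shift:
  assumes "i < p"
  shows "card (trace_class p w i :: 'a set) = card (trace_class p w ((i + 1) mod p) :: 'a set)"
proof -
  obtain d :: 'a where d: "field_trace p w d = 1" using exists_tr1 by blast
  have "(\<lambda>x. x + d) ` (trace_class p w i) = (trace_class p w ((i + 1) mod p) :: 'a set)"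
  proof
    show "(\<lambda>x. x + d) ` trace_class p w i \<subseteq> trace_class p w ((i + 1) mod p)"
      using tv_shift[OF d] by (auto simp: trace_class_def)
    show "trace_class p w ((i + 1) mod p) \<subseteq> (\<lambda>x. x + d) ` trace_class p w i"
    proof
      fix y :: 'a assume y: "y \<in> trace_class p w ((i + 1) mod p)"
      have "trace_val p w y = (trace_val p w (y - d) + 1) mod p"
        using tv_shift[OF d, of "y - d"] by simp
      moreover have "trace_val p w y = (i + 1) mod p" using y by (simp add: trace_class_def)
      ultimately have "(trace_val p w (y - d) + 1) mod p = (i + 1) mod p" by simp
      then have "trace_val p w (y - d) = i"
        using assms tv[of "y - d"] mod_suc_inj by blast
      then have "y - d \<in> trace_class p w i" by (simp add: trace_class_def)
      then show "y \<in> (\<lambda>x. x + d) ` trace_class p w i" by (rule rev_image_eqI) simp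
    qed
  qed
  moreover have "inj_on (\<lambda>x. x + d) (trace_class p w i)" by (rule inj_onI) simp
  then have "card ((\<lambda>x. x + d) ` (trace_class p w i)) = card (trace_class p w i :: 'a set)"
    by (rule card_image)
  ultimately show ?thesis by simp
qed

lemma card_class_eq0: "i < p \<Longrightarrow> card (trace_class p w i :: 'a set) = card (trace_class p w 0 :: 'a set)"
proof (induction i)
  case (Suc i)
  then have "card (trace_class p w i :: 'a set) = card (trace_class p w ((i + 1) mod p) :: 'a set)"
    by (intro card_class_shift) auto
  moreover have "(i + 1) mod p = Suc i" using Suc by simp
  ultimately show ?case using Suc by simp
qed simp

lemma card_class: "i < p \<Longrightarrow> card (trace_class p w i :: 'a set) = p ^ (w - 1)"
proof -
  assume i: "i < p"
  have U: "(UNIV :: 'a set) = (\<Union>i\<in>{..<p}. trace_class p w i)"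
    using tv by (auto simp: trace_class_def)
  have "card (UNIV :: 'a set) = (\<Sum>i<p. card (trace_class p w i :: 'a set))"
  proof -
    have "card (\<Union>i\<in>{..<p}. trace_class p w i :: 'a set) = (\<Sum>i<p. card (trace_class p w i :: 'a set))"
    proof (rule card_UN_disjoint)
      show "\<forall>i\<in>{..<p}. \<forall>j\<in>{..<p}. i \<noteq> j \<longrightarrow> trace_class p w i \<inter> trace_class p w j = ({}::'a set)"
        unfolding trace_class_def by blast
    qed simp_all
    then show ?thesis by (simp only: U[symmetric])
  qed
  also have "\<dots> = (\<Sum>i<p. card (trace_class p w 0 :: 'a set))"
    by (intro sum.cong refl card_class_eq0) simp
  also have "\<dots> = p * card (trace_class p w 0 :: 'a set)" by simp
  finally have "p * card (trace_class p w 0 :: 'a set) = p ^ w"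
    using cardU by simp
  moreover have "p ^ w = p * p ^ (w - 1)" using w1 by (cases w) auto
  ultimately have "p * card (trace_class p w 0 :: 'a set) = p * p ^ (w - 1)" by simp
  then show ?thesis using card_class_eq0[OF i] p2 by simp
qed

end


lemma sin_concave_ineq:
  assumes "0 \<le> t" "t \<le> 1" "0 \<le> th" "th \<le> pi"
  shows "t * sin th \<le> sin (t * th)"
proof -
  have cc: "concave_on {0..pi} sin"
  proof (rule f''_le0_imp_concave[where f' = cos and f'' = "\<lambda>x. - sin x"])
    show "\<And>x. x \<in> {0..pi} \<Longrightarrow> (sin has_real_derivative cos x) (at x)"
      by (rule DERIV_sin)
    show "\<And>x. x \<in> {0..pi} \<Longrightarrow> (cos has_real_derivative - sin x) (at x)"
      by (rule DERIV_cos)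
    show "\<And>x. x \<in> {0..pi} \<Longrightarrow> - sin x \<le> 0" by (auto intro: sin_ge_zero)
  qed simp
  have "(1 - t) * sin 0 + t * sin th \<le> sin ((1 - t) *\<^sub>R 0 + t *\<^sub>R th)"
    by (rule concave_onD[OF cc]) (use assms in auto)
  then show ?thesis by simp
qed

lemma sin_interp:
  "sin ((a::real) + b) * sin th = sin (a + th) * sin b + sin a * sin (th - b)"
  by (simp only: sin_add sin_diff) (simp add: algebra_simps)

lemma geo_cis:
  "(\<Sum>i<k. cis (2 * th * real i)) * complex_of_real (sin th)
     = cis ((real k - 1) * th) * complex_of_real (sin (real k * th))"
proof (induction k)
  case 0
  then show ?case by simp
next
  case (Suc k)
  have "(\<Sum>i<Suc k. cis (2 * th * real i)) * complex_of_real (sin th)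
      = cis ((real k - 1) * th) * complex_of_real (sin (real k * th)) + cis (2 * th * real k) * complex_of_real (sin th)"
    using Suc by (simp add: distrib_right)
  also have "\<dots> = cis (real k * th) * complex_of_real (sin ((real k + 1) * th))"
  proof (rule complex_eqI)
    show "Re (cis ((real k - 1) * th) * complex_of_real (sin (real k * th)) + cis (2 * th * real k) * complex_of_real (sin th)) =
    Re (cis (real k * th) * complex_of_real (sin ((real k + 1) * th)))"
    proof -
      have e1: "(real k - 1) * th = real k * th - th" "2 * th * real k = real k * th + real k * th"
               "(real k + 1) * th = real k * th + th" by (simp_all add: algebra_simps)
      have h: "cos (th * (real k * 2)) = cos (th*real k)*cos(th*real k) - sin(th*real k)*sin(th*real k)"
              "sin (th * (real k * 2)) = 2 * sin (th*real k)*cos(th*real k)"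
        using cos_double[of "th * real k"] sin_double[of "th * real k"]
        by (simp_all add: power2_eq_square algebra_simps)
      show ?thesis unfolding e1 by (simp add: sin_add cos_add sin_diff cos_diff algebra_simps h)
    qed
    show "Im (cis ((real k - 1) * th) * complex_of_real (sin (real k * th)) + cis (2 * th * real k) * complex_of_real (sin th)) =
    Im (cis (real k * th) * complex_of_real (sin ((real k + 1) * th)))"
    proof -
      have e1: "(real k - 1) * th = real k * th - th" "2 * th * real k = real k * th + real k * th"
               "(real k + 1) * th = real k * th + th" by (simp_all add: algebra_simps)
      have h: "cos (th * (real k * 2)) = cos (th*real k)*cos(th*real k) - sin(th*real k)*sin(th*real k)"
              "sin (th * (real k * 2)) = 2 * sin (th*real k)*cos(th*real k)"
        using cos_double[of "th * real k"] sin_double[of "th * real k"]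
        by (simp_all add: power2_eq_square algebra_simps)
      show ?thesis unfolding e1 by (simp add: sin_add cos_add sin_diff cos_diff algebra_simps h)
    qed
  qed
  finally show ?case by (simp add: add.commute)
qed

lemma omega_cis: "omega p i = cis (2 * (pi / real p) * real i)"
  by (simp add: omega_def)

lemma sin_bound:
  fixes p k :: nat and q s2 :: real
  assumes p: "p \<ge> 2" and k: "k + 1 \<le> p" and q: "q > 0" and s2: "0 \<le> s2" "s2 \<le> q"
  shows "cmod (of_real q * (\<Sum>i<k. omega p i) + of_real s2 * omega p k)
         \<le> q * sin (pi * (real k * q + s2) / (q * real p)) / sin (pi / real p)"
proof -
  define th where "th = pi / real p"
  have th0: "0 < th" using p by (simp add: th_def)
  have thpi: "th \<le> pi" using p by (simp add: th_def divide_le_eq)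
  have sth: "sin th > 0" using th0 thpi p by (intro sin_gt_zero) (auto simp: th_def field_simps)
  define G where "G m = (\<Sum>i<m. omega p i)" for m
  have GS: "G m * complex_of_real (sin th) = cis ((real m - 1) * th) * complex_of_real (sin (real m * th))" for m
    unfolding G_def omega_cis th_def[symmetric] by (rule geo_cis)
  define S0 where "S0 = sin (real k * th)"
  define S1 where "S1 = sin ((real k + 1) * th)"
  have kth: "(real k + 1) * th \<le> pi"
  proof -
    have "real k + 1 \<le> real p" using k by linarith
    then have "(real k + 1) * th \<le> real p * th" using th0 by (intro mult_right_mono) auto
    also have "real p * th = pi" using p by (simp add: th_def)
    finally show ?thesis .
  qed
  have S0: "S0 \<ge> 0" unfolding S0_def using kth th0 by (intro sin_ge_zero) (auto simp: field_simps)
  have S1: "S1 \<ge> 0" unfolding S1_def using kth th0 by (intro sin_ge_zero) auto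
  define z where "z = of_real q * G k + of_real s2 * omega p k"
  have z: "z = of_real (q - s2) * G k + of_real s2 * G (Suc k)"
    by (simp add: z_def G_def algebra_simps)
  have "z * complex_of_real (sin th) = of_real (q - s2) * (G k * complex_of_real (sin th)) + of_real s2 * (G (Suc k) * complex_of_real (sin th))"
    unfolding z by (simp add: algebra_simps)
  also have "\<dots> = of_real (q - s2) * (cis ((real k - 1) * th) * complex_of_real S0) + of_real s2 * (cis (real k * th) * complex_of_real S1)"
    unfolding GS S0_def S1_def by (simp add: add.commute)
  finally have zs: "z * complex_of_real (sin th) = of_real (q - s2) * (cis ((real k - 1) * th) * complex_of_real S0) + of_real s2 * (cis (real k * th) * complex_of_real S1)" .
  have "cmod z * sin th = cmod (z * complex_of_real (sin th))" using sth by (simp add: norm_mult)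
  also have "\<dots> \<le> cmod (of_real (q - s2) * (cis ((real k - 1) * th) * complex_of_real S0)) + cmod (of_real s2 * (cis (real k * th) * complex_of_real S1))"
    unfolding zs by (rule norm_triangle_ineq)
  also have "\<dots> = (q - s2) * S0 + s2 * S1"
    using s2 S0 S1 by (simp add: norm_mult del: of_real_diff)
  finally have A: "cmod z * sin th \<le> (q - s2) * S0 + s2 * S1" .
  define x where "x = s2 / q"
  have x: "0 \<le> x" "x \<le> 1" using s2 q by (auto simp: x_def field_simps)
  have "(1 - x) * sin th \<le> sin ((1 - x) * th)" using x th0 thpi by (intro sin_concave_ineq) auto
  then have B1: "(q - s2) * sin th \<le> q * sin ((1 - x) * th)"
    using q by (simp add: x_def field_simps mult_left_mono)
  have "x * sin th \<le> sin (x * th)" using x th0 thpi by (intro sin_concave_ineq) auto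
  then have B2: "s2 * sin th \<le> q * sin (x * th)"
    using q by (simp add: x_def field_simps)
  have "((q - s2) * S0 + s2 * S1) * sin th = ((q - s2) * sin th) * S0 + (s2 * sin th) * S1"
    by (simp add: algebra_simps)
  also have "\<dots> \<le> (q * sin ((1 - x) * th)) * S0 + (q * sin (x * th)) * S1"
    using B1 B2 S0 S1 by (intro add_mono mult_right_mono) auto
  also have "\<dots> = q * (sin (real k * th + th) * sin (x * th) + sin (real k * th) * sin (th - x * th))"
  proof -
    have e: "(1 - x) * th = th - x * th" "(real k + 1) * th = real k * th + th" by (simp_all add: algebra_simps)
    show ?thesis by (simp only: S0_def S1_def e) algebra
  qed
  also have "\<dots> = q * (sin (real k * th + x * th) * sin th)"
    using sin_interp[of "real k * th" "x * th" th] by (simp only:)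
  finally have C: "((q - s2) * S0 + s2 * S1) * sin th \<le> q * sin (real k * th + x * th) * sin th"
    by simp
  have "cmod z * sin th * sin th \<le> q * sin (real k * th + x * th) * sin th"
    using A C sth by (meson mult_right_mono less_imp_le order_trans)
  then have "cmod z * sin th \<le> q * sin (real k * th + x * th)"
    using sth by simp
  then have "cmod z \<le> q * sin (real k * th + x * th) / sin th"
    using sth by (simp add: field_simps)
  moreover have "real k * th + x * th = pi * (real k * q + s2) / (q * real p)"
    using q p by (simp add: th_def x_def field_simps)
  ultimately show ?thesis by (simp add: z_def G_def th_def)
qed



lemma aux_modinv: "i < p \<Longrightarrow> nat ((m + (int i - m) mod int p) mod int p) = i"
proof -
  assume i: "i < p"
  have "(m + (int i - m) mod int p) mod int p = (m + (int i - m)) mod int p"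
    by (simp add: mod_add_right_eq)
  also have "\<dots> = int i" using i by simp
  finally show ?thesis by simp
qed

lemma reindex_mod:
  fixes p :: nat and m :: int and f :: "nat \<Rightarrow> 'b::comm_monoid_add"
  assumes "p > 0"
  shows "(\<Sum>i<p. f i) = (\<Sum>k\<in>{m..m + int p - 1}. f (nat (k mod int p)))"
proof (rule sum.reindex_bij_witness[of _ "\<lambda>k. nat (k mod int p)" "\<lambda>i. m + (int i - m) mod int p"])
  fix i assume i: "i \<in> {..<p}"
  then show "nat ((m + (int i - m) mod int p) mod int p) = i" by (simp add: aux_modinv)
  show "m + (int i - m) mod int p \<in> {m..m + int p - 1}"
    using assms pos_mod_bound[of "int p" "int i - m"] pos_mod_sign[of "int p" "int i - m"] by auto
next
  fix k assume k: "k \<in> {m..m + int p - 1}"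
  have "int (nat (k mod int p)) = k mod int p" using assms by simp
  then have "(int (nat (k mod int p)) - m) mod int p = (k - m) mod int p"
    by (simp add: mod_diff_left_eq)
  also have "\<dots> = k - m" using k by (intro mod_pos_pos_trivial) auto
  finally show "m + (int (nat (k mod int p)) - m) mod int p = k" by simp
  show "nat (k mod int p) \<in> {..<p}" using assms
    by (simp add: nat_less_iff)
qed (simp add: aux_modinv)

definition EE :: "nat \<Rightarrow> int \<Rightarrow> complex" where
  "EE p k = cis (2 * pi * of_int k / real p)"

lemma EE_add: "EE p (a + b) = EE p a * EE p b"
  by (simp add: EE_def cis_mult add_divide_distrib distrib_left)

lemma EE_nat: "EE p (int i) = omega p i"
  by (simp add: EE_def omega_def)

lemma EE_uminus: "EE p (- a) = cnj (EE p a)"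
  by (simp add: EE_def cis_cnj)

lemma EE_norm: "cmod (EE p a) = 1"
  by (simp add: EE_def)

lemma EE_mod:
  assumes "p > 0"
  shows "EE p k = omega p (nat (k mod int p))"
proof -
  have "k = k mod int p + int p * (k div int p)" by simp
  then have "EE p k = EE p (k mod int p) * EE p (int p * (k div int p))"
    by (metis EE_add)
  moreover have "EE p (int p * (k div int p)) = 1"
  proof -
    have "2 * pi * real_of_int (int p * (k div int p)) / real p = 2 * pi * real_of_int (k div int p)"
      using assms by simp
    then show ?thesis unfolding EE_def by simp
  qed
  moreover have "EE p (k mod int p) = omega p (nat (k mod int p))"
    using assms EE_nat[of p "nat (k mod int p)"] by simp
  ultimately show ?thesis by simp
qed

lemma cos_mono_abs:
  fixes a b :: real and p :: nat
  assumes "\<bar>a\<bar> \<le> \<bar>b\<bar>" "\<bar>b\<bar> \<le> real p / 2" "p > 0"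
  shows "cos (2 * pi * b / real p) \<le> cos (2 * pi * a / real p)"
proof -
  have "cos (2 * pi * b / real p) = cos (2 * pi * \<bar>b\<bar> / real p)"
    by (metis (no_types, opaque_lifting) abs_minus_cancel abs_of_nonneg abs_of_nonpos cos_minus linorder_le_cases minus_divide_left mult_minus_right)
  also have "\<dots> \<le> cos (2 * pi * \<bar>a\<bar> / real p)"
  proof (rule cos_monotone_0_pi_le)
    show "0 \<le> 2 * pi * \<bar>a\<bar> / real p" by simp
    show "2 * pi * \<bar>a\<bar> / real p \<le> 2 * pi * \<bar>b\<bar> / real p"
      using assms by (intro divide_right_mono mult_left_mono) auto
    have "2 * pi * \<bar>b\<bar> \<le> 2 * pi * (real p / 2)" using assms by (intro mult_left_mono) auto
    then show "2 * pi * \<bar>b\<bar> / real p \<le> pi" using assms by (simp add: divide_le_eq)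
  qed
  also have "\<dots> = cos (2 * pi * a / real p)"
    by (metis (no_types, opaque_lifting) abs_minus_cancel abs_of_nonneg abs_of_nonpos cos_minus linorder_le_cases minus_divide_left mult_minus_right)
  finally show ?thesis .
qed

lemma exchange:
  fixes R A :: "int set" and j :: int and N c :: "int \<Rightarrow> real" and q s2 :: real and s1 :: nat
  assumes R: "finite R" and A: "A \<subseteq> R" "j \<in> R" "j \<notin> A" "card A = s1"
    and Nb: "\<And>k. k \<in> R \<Longrightarrow> 0 \<le> N k \<and> N k \<le> q"
    and sumN: "(\<Sum>k\<in>R. N k) = real s1 * q + s2"
    and ordA: "\<And>k. k \<in> A \<Longrightarrow> c j \<le> c k"
    and ordR: "\<And>k. k \<in> R \<Longrightarrow> k \<notin> A \<Longrightarrow> k \<noteq> j \<Longrightarrow> c k \<le> c j"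
  shows "(\<Sum>k\<in>R. N k * c k) \<le> q * (\<Sum>k\<in>A. c k) + s2 * c j"
proof -
  define G where "G k = (if k \<in> A then q else 0) + (if k = j then s2 else 0)" for k
  have RA: "R \<inter> A = A" using A by auto
  have IA: "(\<Sum>k\<in>R. (if k \<in> A then f k else 0)) = (\<Sum>k\<in>A. f k)" for f :: "int \<Rightarrow> real"
    using sum.inter_restrict[OF R, of f A] RA by simp
  have SG: "(\<Sum>k\<in>R. G k) = real s1 * q + s2"
    unfolding G_def using R A IA[of "\<lambda>_. q"] by (simp add: sum.distrib)
  have SGc: "(\<Sum>k\<in>R. G k * c k) = q * (\<Sum>k\<in>A. c k) + s2 * c j"
  proof -
    have "(\<Sum>k\<in>R. G k * c k) = (\<Sum>k\<in>R. (if k \<in> A then q * c k else 0)) + (\<Sum>k\<in>R. (if k = j then s2 * c k else 0))"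
      unfolding sum.distrib[symmetric] by (rule sum.cong) (auto simp: G_def distrib_right)
    also have "\<dots> = q * (\<Sum>k\<in>A. c k) + s2 * c j"
      using R A IA[of "\<lambda>k. q * c k"] by (simp add: sum_distrib_left)
    finally show ?thesis .
  qed
  have trm: "(N k - G k) * (c k - c j) \<le> 0" if k: "k \<in> R" for k
  proof (cases "k \<in> A")
    case True
    then have "k \<noteq> j" using A by auto
    then have "G k = q" using True by (simp add: G_def)
    then show ?thesis using Nb[OF k] ordA[OF True] by (simp add: mult_nonpos_nonneg)
  next
    case False
    show ?thesis
    proof (cases "k = j")
      case True then show ?thesis by simp
    next
      case nj: False
      then have "G k = 0" using False by (simp add: G_def)
      then show ?thesis using Nb[OF k] ordR[OF k False nj] by (simp add: mult_nonneg_nonpos)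
    qed
  qed
  have "(\<Sum>k\<in>R. (N k - G k) * (c k - c j)) \<le> 0" by (rule sum_nonpos) (use trm in auto)
  moreover have "(\<Sum>k\<in>R. (N k - G k) * (c k - c j))
      = (\<Sum>k\<in>R. N k * c k) - (\<Sum>k\<in>R. G k * c k) - c j * (\<Sum>k\<in>R. N k) + c j * (\<Sum>k\<in>R. G k)"
    by (simp add: algebra_simps sum_subtractf sum.distrib sum_distrib_left sum_distrib_right)
  ultimately show ?thesis using SGc sumN SG by simp
qed

lemma arc_val1:
  "cmod (of_real q * (\<Sum>k\<in>{m..m + int s1 - 1}. EE p k) + of_real s2 * EE p (m + int s1))
   = cmod (of_real q * (\<Sum>i<s1. omega p i) + of_real s2 * omega p s1)"
proof -
  have "(\<Sum>k\<in>{m..m + int s1 - 1}. EE p k) = (\<Sum>i<s1. EE p (m + int i))"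
    by (rule sum.reindex_bij_witness[of _ "\<lambda>i. m + int i" "\<lambda>k. nat (k - m)"]) auto
  also have "\<dots> = EE p m * (\<Sum>i<s1. omega p i)"
    by (simp add: EE_add EE_nat sum_distrib_left)
  finally have e: "(\<Sum>k\<in>{m..m + int s1 - 1}. EE p k) = EE p m * (\<Sum>i<s1. omega p i)" .
  have "of_real q * (\<Sum>k\<in>{m..m + int s1 - 1}. EE p k) + of_real s2 * EE p (m + int s1)
        = EE p m * (of_real q * (\<Sum>i<s1. omega p i) + of_real s2 * omega p s1)"
    unfolding e by (simp add: EE_add EE_nat algebra_simps)
  then show ?thesis by (simp add: norm_mult EE_norm)
qed

lemma arc_val2:
  "cmod (of_real q * (\<Sum>k\<in>{m + 1..m + int s1}. EE p k) + of_real s2 * EE p m)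
   = cmod (of_real q * (\<Sum>i<s1. omega p i) + of_real s2 * omega p s1)"
proof -
  have "(\<Sum>k\<in>{m + 1..m + int s1}. EE p k) = (\<Sum>i<s1. EE p (m + int s1 - int i))"
    by (rule sum.reindex_bij_witness[of _ "\<lambda>i. m + int s1 - int i" "\<lambda>k. nat (m + int s1 - k)"]) auto
  also have "\<dots> = EE p (m + int s1) * cnj (\<Sum>i<s1. omega p i)"
  proof -
    have "EE p (m + int s1 - int i) = EE p (m + int s1) * cnj (omega p i)" for i
      by (metis EE_add EE_nat EE_uminus diff_conv_add_uminus)
    then show ?thesis by (simp add: sum_distrib_left)
  qed
  finally have e: "(\<Sum>k\<in>{m + 1..m + int s1}. EE p k) = EE p (m + int s1) * cnj (\<Sum>i<s1. omega p i)" .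
  have em: "EE p m = EE p (m + int s1) * cnj (omega p s1)"
    by (metis EE_add EE_nat EE_uminus add_diff_cancel_right' diff_conv_add_uminus)
  have "of_real q * (\<Sum>k\<in>{m + 1..m + int s1}. EE p k) + of_real s2 * EE p m
        = EE p (m + int s1) * cnj (of_real q * (\<Sum>i<s1. omega p i) + of_real s2 * omega p s1)"
    unfolding e em by (simp add: algebra_simps)
  then show ?thesis by (simp only: norm_mult EE_norm complex_mod_cnj mult_1)
qed

lemma main_ineq:
  fixes p s1 :: nat and q s2 :: real and n :: "nat \<Rightarrow> real"
  assumes p: "p \<ge> 2" and s1: "s1 < p" and q: "q > 0" and s2: "0 \<le> s2" "s2 \<le> q"
    and n: "\<And>i. i < p \<Longrightarrow> 0 \<le> n i \<and> n i \<le> q"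
    and sumn: "(\<Sum>i<p. n i) = real s1 * q + s2"
  shows "cmod (\<Sum>i<p. of_real (n i) * omega p i)
         \<le> cmod (of_real q * (\<Sum>i<s1. omega p i) + of_real s2 * omega p s1)"
proof -
  define z where "z = (\<Sum>i<p. of_real (n i) * omega p i)"
  define M where "M = cmod (of_real q * (\<Sum>i<s1. omega p i) + of_real s2 * omega p s1)"
  have p0: "p > 0" using p by simp
  show ?thesis
  proof (cases "z = 0")
    case True
    then show ?thesis unfolding z_def[symmetric] by simp
  next
    case False
    define ph where "ph = Arg z"
    have "z = of_real (cmod z) * cis ph"
      using rcis_cmod_Arg[of z] by (simp add: rcis_def ph_def)
    then have zc: "z * cis (- ph) = of_real (cmod z)"
      by (metis cis_mult add.right_inverse cis_zero mult.assoc mult.right_neutral)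
    define c where "c k = Re (EE p k * cis (- ph))" for k
    have cz: "cmod z = (\<Sum>i<p. n i * c (int i))"
    proof -
      have "cmod z = Re (z * cis (- ph))" using zc by simp
      also have "\<dots> = (\<Sum>i<p. n i * c (int i))"
        unfolding z_def c_def by (simp add: sum_distrib_right EE_nat mult.assoc)
      finally show ?thesis .
    qed
    define x where "x = ph * real p / (2 * pi)"
    have cform: "c k = cos (2 * pi * (of_int k - x) / real p)" for k
    proof -
      have "c k = cos (2 * pi * of_int k / real p - ph)"
        by (simp add: c_def EE_def cis_mult)
      also have "2 * pi * of_int k / real p - ph = 2 * pi * (of_int k - x) / real p"
        using p0 by (simp add: x_def field_simps)
      finally show ?thesis .
    qed
    define m where "m = \<lfloor>x - real s1 / 2 + 1 / 2\<rfloor>"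
    have m1: "of_int m \<le> x - real s1 / 2 + 1 / 2" unfolding m_def by simp
    have m2: "x - real s1 / 2 + 1 / 2 < of_int m + 1" unfolding m_def by simp
    define R where "R = {m..m + int p - 1}"
    define N where "N k = n (nat (k mod int p))" for k
    have cmod_R: "cmod z = (\<Sum>k\<in>R. N k * c k)"
    proof -
      have "cmod z = (\<Sum>k\<in>R. n (nat (k mod int p)) * c (int (nat (k mod int p))))"
        unfolding cz R_def by (rule reindex_mod[OF p0])
      also have "\<dots> = (\<Sum>k\<in>R. N k * c k)"
      proof (rule sum.cong)
        fix k
        have "EE p (int (nat (k mod int p))) = EE p k"
          using EE_nat EE_mod[OF p0] by metis
        then show "n (nat (k mod int p)) * c (int (nat (k mod int p))) = N k * c k"
          by (simp add: N_def c_def)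
      qed simp
      finally show ?thesis .
    qed
    have sumN: "(\<Sum>k\<in>R. N k) = real s1 * q + s2"
      unfolding N_def R_def using reindex_mod[OF p0, of n m] sumn by simp
    have Nb: "0 \<le> N k \<and> N k \<le> q" if "k \<in> R" for k
    proof -
      have "nat (k mod int p) < p" using p0 by (simp add: nat_less_iff)
      then show ?thesis using n by (simp add: N_def)
    qed
    define cond where "cond = (of_int m + real s1 - x \<ge> x - of_int m)"
    define j where "j = (if cond then m + int s1 else m)"
    define A where "A = (if cond then {m..m + int s1 - 1} else {m + 1..m + int s1})"
    have AR: "A \<subseteq> R" using s1 by (auto simp: A_def R_def)
    have jR: "j \<in> R" using s1 by (auto simp: j_def R_def)
    have jA: "j \<notin> A" by (auto simp: j_def A_def)
    have cA: "card A = s1" by (auto simp: A_def)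
    have jb: "\<bar>of_int j - x\<bar> \<le> (real s1 + 1) / 2"
      using m1 m2 by (auto simp: j_def cond_def)
    have jp: "(real s1 + 1) / 2 \<le> real p / 2" using s1 by simp
    have ordA: "c j \<le> c k" if k: "k \<in> A" for k
    proof -
      have "\<bar>of_int k - x\<bar> \<le> \<bar>of_int j - x\<bar>"
      proof (cases cond)
        case True
        then have "m \<le> k" "k \<le> m + int s1 - 1" using k by (auto simp: A_def)
        then have "of_int m \<le> (of_int k :: real)" "(of_int k :: real) \<le> of_int m + real s1 - 1"
          by linarith+
        then show ?thesis using True by (auto simp: j_def cond_def)
      next
        case False
        then have "m + 1 \<le> k" "k \<le> m + int s1" using k by (auto simp: A_def)
        then have "of_int m + 1 \<le> (of_int k :: real)" "(of_int k :: real) \<le> of_int m + real s1"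
          by linarith+
        then show ?thesis using False by (auto simp: j_def cond_def)
      qed
      then show ?thesis unfolding cform using jb jp p0 by (intro cos_mono_abs) auto
    qed
    have ordR: "c k \<le> c j" if k: "k \<in> R" "k \<notin> A" "k \<noteq> j" for k
    proof -
      have "m + int s1 + 1 \<le> k" "k \<le> m + int p - 1"
        using k by (auto simp: A_def R_def j_def split: if_splits)
      then have k1: "of_int m + real s1 + 1 \<le> (of_int k :: real)" "(of_int k :: real) \<le> of_int m + real p - 1"
        by linarith+
      have lo: "(real s1 + 1) / 2 \<le> of_int k - x" using k1 m1 m2 by (simp add: field_simps)
      have hi: "(real s1 + 1) / 2 \<le> real p - (of_int k - x)" using k1 m1 m2 by (simp add: field_simps)
      show ?thesis
      proof (cases "of_int k - x \<le> real p / 2")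
        case True
        have "cos (2 * pi * (of_int k - x) / real p) \<le> cos (2 * pi * (of_int j - x) / real p)"
          using True lo jb p0 by (intro cos_mono_abs) auto
        then show ?thesis by (simp add: cform)
      next
        case False
        have "cos (2 * pi * (of_int k - x - real p) / real p) \<le> cos (2 * pi * (of_int j - x) / real p)"
          using False hi jb p0 by (intro cos_mono_abs) auto
        moreover have "cos (2 * pi * (of_int k - x - real p) / real p) = cos (2 * pi * (of_int k - x) / real p)"
        proof -
          have "2 * pi * (of_int k - x - real p) / real p = 2 * pi * (of_int k - x) / real p - 2 * pi"
            using p0 by (simp add: field_simps)
          then show ?thesis by (simp add: cos_diff)
        qed
        ultimately show ?thesis by (simp add: cform)
      qed
    qed
    have "cmod z \<le> q * (\<Sum>k\<in>A. c k) + s2 * c j"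
      unfolding cmod_R
    proof (rule exchange[where R=R and A=A and j=j and N=N and c=c])
      show "finite R" by (simp add: R_def)
    qed (fact AR jR jA cA sumN | rule Nb ordA ordR, assumption+)+
    also have "\<dots> = Re ((of_real q * (\<Sum>k\<in>A. EE p k) + of_real s2 * EE p j) * cis (- ph))"
      by (simp add: c_def sum_distrib_left sum_distrib_right algebra_simps)
    also have "\<dots> \<le> cmod ((of_real q * (\<Sum>k\<in>A. EE p k) + of_real s2 * EE p j) * cis (- ph))"
      by (rule complex_Re_le_cmod)
    also have "\<dots> = cmod (of_real q * (\<Sum>k\<in>A. EE p k) + of_real s2 * EE p j)"
      by (simp add: norm_mult)
    also have "\<dots> = M"
      unfolding M_def A_def j_def using arc_val1 arc_val2 by simp
    finally show ?thesis unfolding z_def M_def .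
  qed
qed


theorem lemma3p2:
  fixes S Tstar :: "'a::{finite,field} set"
    and p w s1 s2 :: nat
  assumes "prime p" and "w \<ge> 1" and "card (UNIV :: 'a set) = p ^ w"
    and "card S \<le> p ^ w - 1"
    and "card S = s1 * p ^ (w - 1) + s2"
    and "s1 \<le> p - 1" and "s2 \<le> p ^ (w - 1) - 1"
    and "Tstar \<subseteq> trace_class p w s1" and "card Tstar = s2"
  shows "cmod (omega_sum p w S)
           \<le> cmod (omega_sum p w ((\<Union>i<s1. trace_class p w i) \<union> Tstar))
       \<and> cmod (omega_sum p w ((\<Union>i<s1. trace_class p w i) \<union> Tstar))
           = cmod (of_nat s2 * (\<Sum>i\<le>s1. omega p i)
                   + of_nat (p ^ (w - 1) - s2) * (\<Sum>i<s1. omega p i))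
       \<and> cmod (omega_sum p w ((\<Union>i<s1. trace_class p w i) \<union> Tstar))
           \<le> real (p ^ (w - 1)) * (sin (pi * real (card S) / real (p ^ w)) / sin (pi / real p))"
proof -
  interpret ffield p w "TYPE('a)"
    using assms(1-3) by unfold_locales
  define q where "q = p ^ (w - 1)"
  have q0: "q > 0" using p2 by (simp add: q_def)
  have pwq: "p ^ w = p * q" using w1 by (cases w) (auto simp: q_def)
  have s1p: "s1 < p" using assms(6) p2 by simp
  have s2q: "s2 \<le> q" using assms(7) by (simp add: q_def)
  define tc where "tc i = (trace_class p w i :: 'a set)" for i
  have cq: "i < p \<Longrightarrow> card (tc i) = q" for i by (simp add: tc_def card_class q_def)
  have tvp: "trace_val p w (x::'a) < p" for x using tv by blast
  have grp: "omega_sum p w A = (\<Sum>i<p. of_real (real (card (A \<inter> tc i))) * omega p i)"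
    and grc: "(\<Sum>i<p. card (A \<inter> tc i)) = card A" for A :: "'a set"
  proof -
    have im: "(\<lambda>x. trace_val p w x) ` A \<subseteq> {..<p}" using tvp by auto
    have set_eq: "{x \<in> A. trace_val p w x = i} = A \<inter> tc i" for i
      by (auto simp: tc_def trace_class_def)
    have "omega_sum p w A = (\<Sum>i<p. \<Sum>x\<in>{x \<in> A. trace_val p w x = i}. omega p (trace_val p w x))"
      unfolding omega_sum_def by (rule sum.group[symmetric]) (use im in auto)
    also have "\<dots> = (\<Sum>i<p. of_real (real (card (A \<inter> tc i))) * omega p i)"
    proof (rule sum.cong)
      fix i
      have "(\<Sum>x\<in>{x \<in> A. trace_val p w x = i}. omega p (trace_val p w x)) = (\<Sum>x\<in>A \<inter> tc i. omega p i)"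
        unfolding set_eq by (rule sum.cong) (auto simp: tc_def trace_class_def)
      then show "(\<Sum>x\<in>{x \<in> A. trace_val p w x = i}. omega p (trace_val p w x)) = of_real (real (card (A \<inter> tc i))) * omega p i"
        by simp
    qed simp
    finally show "omega_sum p w A = (\<Sum>i<p. of_real (real (card (A \<inter> tc i))) * omega p i)" .
    have "(\<Sum>i<p. \<Sum>x\<in>{x \<in> A. trace_val p w x = i}. (1::nat)) = (\<Sum>x\<in>A. 1)"
      by (rule sum.group) (use im in auto)
    then show "(\<Sum>i<p. card (A \<inter> tc i)) = card A" by (simp add: set_eq)
  qed
  define M where "M = of_real (real q) * (\<Sum>i<s1. omega p i) + of_real (real s2) * omega p s1"
  have ineq: "cmod (omega_sum p w S) \<le> cmod M"
    unfolding grp M_def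
  proof (rule main_ineq)
    show "2 \<le> p" by (rule p2)
    show "s1 < p" by (rule s1p)
    show "0 < real q" using q0 by simp
    show "0 \<le> real s2" "real s2 \<le> real q" using s2q by auto
    show "0 \<le> real (card (S \<inter> tc i)) \<and> real (card (S \<inter> tc i)) \<le> real q" if "i < p" for i
      using card_mono[of "tc i" "S \<inter> tc i"] cq[OF that] by auto
    have "(\<Sum>i<p. real (card (S \<inter> tc i))) = real (card S)"
      using grc[of S] by (metis of_nat_sum)
    then show "(\<Sum>i<p. real (card (S \<inter> tc i))) = real s1 * real q + real s2"
      using assms(5) by (simp add: q_def)
  qed
  define Sst where "Sst = (\<Union>i<s1. trace_class p w i) \<union> Tstar"
  have Sst_val: "omega_sum p w Sst = M"
  proof -
    have tvT: "x \<in> Tstar \<Longrightarrow> trace_val p w x = s1" for x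
      using assms(8) by (auto simp: trace_class_def)
    have disj: "(\<Union>i<s1. (trace_class p w i :: 'a set)) \<inter> Tstar = ({} :: 'a set)"
      using tvT by (auto simp: trace_class_def)
    have "omega_sum p w Sst = (\<Sum>x\<in>(\<Union>i<s1. (trace_class p w i :: 'a set)). omega p (trace_val p w x)) + (\<Sum>x\<in>Tstar. omega p (trace_val p w x))"
      unfolding omega_sum_def Sst_def by (rule sum.union_disjoint) (use disj in auto)
    also have "(\<Sum>x\<in>(\<Union>i<s1. (trace_class p w i :: 'a set)). omega p (trace_val p w x)) = (\<Sum>i<s1. \<Sum>x\<in>(trace_class p w i :: 'a set). omega p (trace_val p w x))"
      by (rule sum.UNION_disjoint) (auto simp: trace_class_def)
    also have "\<dots> = (\<Sum>i<s1. of_real (real q) * omega p i)"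
    proof (rule sum.cong)
      fix i assume i: "i \<in> {..<s1}"
      have "(\<Sum>x\<in>(trace_class p w i :: 'a set). omega p (trace_val p w x)) = (\<Sum>x\<in>(trace_class p w i :: 'a set). omega p i)"
        by (rule sum.cong) (auto simp: trace_class_def)
      also have "\<dots> = of_real (real q) * omega p i" using cq[of i] i s1p by (simp add: tc_def)
      finally show "(\<Sum>x\<in>(trace_class p w i :: 'a set). omega p (trace_val p w x)) = of_real (real q) * omega p i" .
    qed simp
    also have "(\<Sum>x\<in>Tstar. omega p (trace_val p w x)) = (\<Sum>x\<in>Tstar. omega p s1)"
      by (rule sum.cong) (auto simp: tvT)
    also have "\<dots> = of_real (real s2) * omega p s1" using assms(9) by simp
    finally show ?thesis by (simp add: M_def sum_distrib_left)
  qed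
  have mid: "of_nat s2 * (\<Sum>i\<le>s1. omega p i) + of_nat (p ^ (w - 1) - s2) * (\<Sum>i<s1. omega p i) = M"
  proof -
    have a: "(\<Sum>i\<le>s1. omega p i) = (\<Sum>i<s1. omega p i) + omega p s1"
      by (simp add: lessThan_Suc_atMost[symmetric])
    have b: "(of_nat (p ^ (w - 1) - s2) :: complex) = of_nat q - of_nat s2"
      using s2q by (simp add: q_def of_nat_diff)
    show ?thesis by (simp only: a b M_def of_real_of_nat_eq) (simp add: algebra_simps)
  qed
  have bnd: "cmod M \<le> real (p ^ (w - 1)) * (sin (pi * real (card S) / real (p ^ w)) / sin (pi / real p))"
  proof -
    have "cmod M \<le> real q * sin (pi * (real s1 * real q + real s2) / (real q * real p)) / sin (pi / real p)"
      unfolding M_def using p2 s1p q0 s2q by (intro sin_bound) auto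
    also have "real s1 * real q + real s2 = real (card S)" using assms(5) by (simp add: q_def)
    also have "real q * real p = real (p ^ w)" using pwq by simp
    finally show ?thesis by (simp add: q_def)
  qed
  show ?thesis
    using ineq Sst_val mid bnd unfolding Sst_def[symmetric] by simp
qed

end
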